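(* For every integer $n\ge 1$, let $\rho_n$ be the number of distinct Manacher arrays of strings of length $n$ (over arbitrary alphabets), and let $r_{m}$ be the number of distinct rooted duplication trees with $m$ leaves. Then $\rho_n \le r_{n+1}$.
   Context: Strings are indexed from 1; $S[i..j]=S[i]S[i+1]\cdots S[j]$ (empty if $j<i$). A string $P$ is a palindrome if $P[i]=P[|P|-i+1]$ for all $i$. The Manacher array of a string $S$ of length $n$ is the array $\mathsf A[1..2n-1]$ where, for $i=2k-1$, $\mathsf A[i]$ is the largest $r\ge 0$ with $1\le k-r$, $k+r\le n$ and $S[k-r..k+r]$ a palindrome, and for $i=2k$, $\mathsf A[i]$ is the largest $r\ge0$ with $1\le k-r+1$, $k+r\le n$ and $S[k-r+1..k+r]$ a palindrome. Rooted duplication trees: start with the ordered array $(g)$ consisting of a single gene (the root). A tandem-duplication event applied to a current ordered array of genes $(g_1,\dots,g_m)$ chooses a contiguous block $g_i,\dots,g_{i+\ell-1}$ ($1\le i\le i+\ell-1\le m$), creates for each $g_j$ in the block two new genes $\mathrm{lc}(g_j)$, $\mathrm{rc}(g_j)$ (its left and right child), and replaces the block by $\mathrm{lc}(g_i),\dots,\mathrm{lc}(g_{i+\ell-1}),\mathrm{rc}(g_i),\dots,\mathrm{rc}(g_{i+\ell-1})$. A rooted duplication tree is a rooted binary tree (each internal node has a left and a right child) together with the linear order on its leaves, which arises from the single root by some finite sequence of such events (internal nodes are the duplicated genes, leaves are the genes of the final array, in the final array's order). Two such trees are identified if they are isomorphic as rooted binary trees preserving left/right children and the leaf order; $r_m$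 counts the resulting classes with $m$ leaves. *)

theory Defs
  imports Main
begin

text \<open>1-indexed substring S[a..b] (for a \<ge> 1); empty if b < a.\<close>
definition substr :: "'a list \<Rightarrow> nat \<Rightarrow> nat \<Rightarrow> 'a list" where
  "substr S a b = take (Suc b - a) (drop (a - 1) S)"

definition is_palindrome :: "'a list \<Rightarrow> bool" where
  "is_palindrome P \<longleftrightarrow> (\<forall>i\<in>{1..length P}. P ! (i - 1) = P ! (length P - i))"

definition manacher_entry :: "'a list \<Rightarrow> nat \<Rightarrow> nat" where
  "manacher_entry S i =
     (let n = length S in
      if odd i then
        (let k = (i + 1) div 2 in
         GREATEST r. 1 + r \<le> k \<and> k + r \<le> n \<and> is_palindrome (substr S (k - r) (k + r)))
      else
        (let k = i div 2 in
         GREATEST r. r \<le> k \<and> k + r \<le> n \<and> is_palindrome (substr S (k - r + 1) (k + r))))"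

text \<open>The Manacher array A[1..2n-1], as a list (list position j holds A[j+1]).\<close>
definition manacher :: "'a list \<Rightarrow> nat list" where
  "manacher S = map (manacher_entry S) [1..<2 * length S]"

text \<open>Number of distinct Manacher arrays of strings of length n. Strings are taken
  over the alphabet nat (a string of length n uses at most n letters, so every
  alphabet is covered up to renaming).\<close>
definition rho :: "nat \<Rightarrow> nat" where
  "rho n = card {manacher (S :: nat list) | S. length S = n}"

text \<open>Genes are identified with their path from the root (False = left child,
  True = right child). A rooted duplication tree (with its leaf order) is then
  exactly the final ordered array of paths.\<close>
definition dup_event :: "bool list list \<Rightarrow> nat \<Rightarrow> nat \<Rightarrow> bool list list" where
  "dup_event xs i l =
     (let blk = take l (drop (i - 1) xs) in
      take (i - 1) xs @ map (\<lambda>p. p @ [False]) blk @ map (\<lambda>p. p @ [True]) blk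
        @ drop (i - 1 + l) xs)"

inductive dup_reachable :: "bool list list \<Rightarrow> bool" where
  root: "dup_reachable [[]]"
| step: "dup_reachable xs \<Longrightarrow> 1 \<le> i \<Longrightarrow> 1 \<le> l \<Longrightarrow> i + l - 1 \<le> length xs
           \<Longrightarrow> dup_reachable (dup_event xs i l)"

definition r_count :: "nat \<Rightarrow> nat" where
  "r_count m = card {xs. dup_reachable xs \<and> length xs = m}"

end

theory Submission
  imports Defs
begin


lemma length_dup_event:
  assumes "1 \<le> i" "i + l - 1 \<le> length xs" "1 \<le> l"
  shows "length (dup_event xs i l) = length xs + l"
  using assms unfolding dup_event_def Let_def by (simp add: min_def) linarith

lemma set_dup_event:
  "set (dup_event xs i l) \<subseteq> set xs \<union> (\<lambda>p. p @ [False]) ` set xs \<union> (\<lambda>p. p @ [True]) ` set xs"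
proof
  fix p assume "p \<in> set (dup_event xs i l)"
  then have "p \<in> set xs \<or> (\<exists>q\<in>set (take l (drop (i - 1) xs)). p = q @ [False] \<or> p = q @ [True])"
    unfolding dup_event_def Let_def by (auto dest: in_set_takeD in_set_dropD)
  then show "p \<in> set xs \<union> (\<lambda>p. p @ [False]) ` set xs \<union> (\<lambda>p. p @ [True]) ` set xs"
    by (auto dest!: in_set_takeD in_set_dropD)
qed

lemma reach_len: "dup_reachable xs \<Longrightarrow> 1 \<le> length xs"
  by (induction rule: dup_reachable.induct) (auto simp: length_dup_event)

lemma reach_paths: "dup_reachable xs \<Longrightarrow> \<forall>p\<in>set xs. length p < length xs"
proof (induction rule: dup_reachable.induct)
  case root then show ?case by simp
next
  case (step xs i l)
  have L: "length (dup_event xs i l) = length xs + l" using step by (simp add: length_dup_event)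
  show ?case
  proof
    fix p assume "p \<in> set (dup_event xs i l)"
    then have "p \<in> set xs \<or> (\<exists>q\<in>set xs. p = q @ [False] \<or> p = q @ [True])"
      using set_dup_event by blast
    then show "length p < length (dup_event xs i l)" using step.IH L step.hyps by auto
  qed
qed

lemma dup_event_ctx:
  assumes "1 \<le> i" "i + l - 1 \<le> length xs" "1 \<le> l"
  shows "dup_event (pre @ map ((@) p) xs @ post) (i + length pre) l
       = pre @ map ((@) p) (dup_event xs i l) @ post"
proof -
  have e1: "i + length pre - 1 = length pre + (i - 1)" using assms by simp
  have t1: "take l (drop (i - 1) (map ((@) p) xs @ post)) = map ((@) p) (take l (drop (i - 1) xs))"
    using assms by (simp add: take_map drop_map)
  have t2: "drop (i - 1 + l) (map ((@) p) xs @ post) = map ((@) p) (drop (i - 1 + l) xs) @ post"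
    using assms by (simp add: drop_map)
  have t3: "take (i - 1) (map ((@) p) xs @ post) = map ((@) p) (take (i - 1) xs)"
    using assms by (simp add: take_map)
  show ?thesis
    unfolding dup_event_def Let_def e1
    using t1 t2 t3
    by (simp add: drop_append take_append add.assoc)
qed

lemma reach_subst:
  assumes "dup_reachable xs" "dup_reachable (pre @ [p] @ post)"
  shows "dup_reachable (pre @ map ((@) p) xs @ post)"
  using assms(1)
proof induction
  case root then show ?case using assms(2) by simp
next
  case (step xs i l)
  have "dup_reachable (dup_event (pre @ map ((@) p) xs @ post) (i + length pre) l)"
    by (rule dup_reachable.step[OF step.IH]) (use step.hyps in auto)
  then show ?case using dup_event_ctx step.hyps by simp
qed

definition X :: "nat \<Rightarrow> bool list list set" where
  "X m = {xs. dup_reachable xs \<and> length xs = m}"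

lemma finite_X: "finite (X m)"
proof -
  have "X m \<subseteq> {xs. set xs \<subseteq> {p::bool list. set p \<subseteq> UNIV \<and> length p \<le> m} \<and> length xs = m}"
    unfolding X_def using reach_paths by fastforce
  moreover have "finite {xs. set xs \<subseteq> {p::bool list. set p \<subseteq> UNIV \<and> length p \<le> m} \<and> length xs = m}"
    by (rule finite_lists_length_eq) (rule finite_lists_length_le, simp)
  ultimately show ?thesis by (rule finite_subset)
qed

lemma r_count_X: "r_count m = card (X m)"
  by (simp add: r_count_def X_def)


definition enc2 :: "bool list list \<times> bool list list \<Rightarrow> bool list list" where
  "enc2 = (\<lambda>(x,y). map ((#) False) x @ map ((#) True) y)"

definition enc4 :: "(bool list list \<times> bool list list) \<times> (bool list list \<times> bool list list) \<Rightarrow> bool list list" where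
  "enc4 = (\<lambda>((x1,x2),(x3,x4)). map ((@) [False,False]) x1 @ map ((@) [True,False]) x2
             @ map ((@) [False,True]) x3 @ map ((@) [True,True]) x4)"

definition P2 :: "nat \<Rightarrow> (bool list list \<times> bool list list) set" where
  "P2 m = (\<Union>a\<in>{..m}. X a \<times> X (m - a))"

definition P4 :: "nat \<Rightarrow> ((bool list list \<times> bool list list) \<times> (bool list list \<times> bool list list)) set" where
  "P4 m = (\<Union>s\<in>{..m}. P2 s \<times> P2 (m - s))"

lemma reach_L0: "dup_reachable [[False],[True]]"
proof -
  have "dup_reachable (dup_event [[]] 1 1)" by (rule dup_reachable.step) (auto intro: dup_reachable.root)
  then show ?thesis by (simp add: dup_event_def)
qed

lemma reach_L1: "dup_reachable [[False,False],[True,False],[False,True],[True,True]]"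
proof -
  have "dup_reachable (dup_event [[False],[True]] 1 2)" by (rule dup_reachable.step) (auto intro: reach_L0)
  then show ?thesis by (simp add: dup_event_def)
qed

lemma map_cons_app: "map ((#) b) x = map ((@) [b]) x" by simp

lemma enc2_reach:
  assumes "dup_reachable x" "dup_reachable y"
  shows "dup_reachable (enc2 (x,y))"
proof -
  have "dup_reachable ([] @ map ((@) [False]) x @ [[True]])"
    by (rule reach_subst[OF assms(1)]) (simp add: reach_L0)
  then have "dup_reachable (map ((@) [False]) x @ map ((@) [True]) y @ [])"
    by (intro reach_subst[OF assms(2)]) simp
  then show ?thesis by (simp add: enc2_def del: append_Cons append_Nil) (simp add: map_cons_app)
qed

lemma enc4_reach:
  assumes "dup_reachable x1" "dup_reachable x2" "dup_reachable x3" "dup_reachable x4"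
  shows "dup_reachable (enc4 ((x1,x2),(x3,x4)))"
proof -
  let ?f = "\<lambda>p. map ((@) p)"
  have "dup_reachable ([] @ ?f [False,False] x1 @ [[True,False],[False,True],[True,True]])"
    by (rule reach_subst[OF assms(1)]) (simp add: reach_L1)
  then have "dup_reachable (?f [False,False] x1 @ ?f [True,False] x2 @ [[False,True],[True,True]])"
    by (intro reach_subst[OF assms(2)]) simp
  then have "dup_reachable ((?f [False,False] x1 @ ?f [True,False] x2) @ ?f [False,True] x3 @ [[True,True]])"
    by (intro reach_subst[OF assms(3)]) simp
  then have "dup_reachable ((?f [False,False] x1 @ ?f [True,False] x2 @ ?f [False,True] x3) @ ?f [True,True] x4 @ [])"
    by (intro reach_subst[OF assms(4)]) simp
  then show ?thesis by (simp add: enc4_def)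
qed

definition dec2 :: "bool list list \<Rightarrow> bool list list \<times> bool list list" where
  "dec2 ys = (map tl (filter (\<lambda>p. hd p = False) ys), map tl (filter (\<lambda>p. hd p = True) ys))"

lemma dec2_enc2: "dec2 (enc2 z) = z"
  by (cases z) (simp add: dec2_def enc2_def filter_map o_def map_idI)

definition dec4 where
  "dec4 ys = (let g = (\<lambda>pr. map (drop 2) (filter (\<lambda>p. take 2 p = pr) ys)) in
     ((g [False,False], g [True,False]), (g [False,True], g [True,True])))"

lemma dec4_enc4: "dec4 (enc4 z) = z"
  by (cases z) (auto simp: dec4_def enc4_def filter_map o_def Let_def)

lemma inj_enc2: "inj enc2" by (metis dec2_enc2 injI)
lemma inj_enc4: "inj enc4" by (metis dec4_enc4 injI)

lemma X_nonempty_list: "xs \<in> X a \<Longrightarrow> xs \<noteq> []"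
  using reach_len by (fastforce simp: X_def)

lemma enc2_sorted:
  assumes "ys = enc2 z" "i < j" "j < length ys" "hd (ys ! i) = True"
  shows "hd (ys ! j) = True"
proof -
  obtain x y where z: "z = (x,y)" by (cases z)
  have ys: "ys = map ((#) False) x @ map ((#) True) y" using assms z by (simp add: enc2_def)
  have "\<not> i < length x"
  proof
    assume "i < length x" then have "hd (ys ! i) = False" using ys by (simp add: nth_append)
    then show False using assms by simp
  qed
  then show ?thesis using ys assms by (simp add: nth_append)
qed

lemma enc4_unsorted:
  assumes "x2 \<noteq> []" "x3 \<noteq> []"
  shows "\<exists>i j. i < j \<and> j < length (enc4 ((x1,x2),(x3,x4))) \<and> hd (enc4 ((x1,x2),(x3,x4)) ! i) = True
          \<and> hd (enc4 ((x1,x2),(x3,x4)) ! j) = False"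
proof (intro exI conjI)
  let ?ys = "enc4 ((x1,x2),(x3,x4))"
  show "length x1 < length x1 + length x2" using assms by simp
  show "length x1 + length x2 < length ?ys" using assms by (simp add: enc4_def)
  show "hd (?ys ! length x1) = True" using assms by (simp add: enc4_def nth_append hd_conv_nth)
  show "hd (?ys ! (length x1 + length x2)) = False" using assms
    by (simp add: enc4_def nth_append hd_conv_nth)
qed

lemma fam_disjoint: "enc2 ` P2 m \<inter> enc4 ` P4 m = {}"
proof -
  { fix z w assume "z \<in> P2 m" "w \<in> P4 m" "enc2 z = enc4 w"
    obtain x1 x2 x3 x4 where w: "w = ((x1,x2),(x3,x4))" by (metis prod.exhaust)
    have "x2 \<noteq> []" "x3 \<noteq> []" using \<open>w \<in> P4 m\<close> w X_nonempty_list
      by (auto simp: P4_def P2_def)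
    then obtain i j where "i < j" "j < length (enc4 w)" "hd (enc4 w ! i) = True" "hd (enc4 w ! j) = False"
      using enc4_unsorted w by blast
    then have False using enc2_sorted[OF \<open>enc2 z = enc4 w\<close>[symmetric]] by fastforce }
  then show ?thesis by blast
qed

lemma fam_sub: "enc2 ` P2 m \<union> enc4 ` P4 m \<subseteq> X m"
proof -
  have "enc2 z \<in> X m" if "z \<in> P2 m" for z
    using that enc2_reach by (auto simp: P2_def X_def enc2_def)
  moreover have "enc4 w \<in> X m" if "w \<in> P4 m" for w
    using that enc4_reach by (auto simp: P4_def P2_def X_def enc4_def)
  ultimately show ?thesis by blast
qed

lemma finite_P2: "finite (P2 m)" by (simp add: P2_def finite_X)
lemma finite_P4: "finite (P4 m)" by (simp add: P4_def finite_P2)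

lemma X_mem_len: "xs \<in> X a \<Longrightarrow> length xs = a" by (simp add: X_def)

lemma card_P2: "card (P2 m) = (\<Sum>a\<le>m. card (X a) * card (X (m - a)))"
  unfolding P2_def
  apply (subst card_UN_disjoint)
     apply (simp_all add: finite_X card_cartesian_product)
  apply (auto dest: X_mem_len)
  done

lemma P2_mem_len: "z \<in> P2 s \<Longrightarrow> length (fst z) + length (snd z) = s"
  by (auto simp: P2_def X_def)

lemma card_P4: "card (P4 m) = (\<Sum>s\<le>m. card (P2 s) * card (P2 (m - s)))"
  unfolding P4_def
  apply (subst card_UN_disjoint)
     apply (simp_all add: finite_P2 card_cartesian_product)
  apply (auto dest: P2_mem_len)
  done

definition S2 :: "(nat \<Rightarrow> nat) \<Rightarrow> nat \<Rightarrow> nat" where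
  "S2 f m = (\<Sum>a\<le>m. f a * f (m - a))"
definition S4 :: "(nat \<Rightarrow> nat) \<Rightarrow> nat \<Rightarrow> nat" where
  "S4 f m = (\<Sum>s\<le>m. S2 f s * S2 f (m - s))"

lemma R_rec: "S2 r_count m + S4 r_count m \<le> r_count m"
proof -
  have c2: "card (P2 m) = S2 r_count m" by (simp add: card_P2 S2_def r_count_X)
  have c4: "card (P4 m) = S4 r_count m"
    by (simp add: card_P4 S4_def S2_def r_count_X card_P2)
  have "card (enc2 ` P2 m \<union> enc4 ` P4 m) = card (P2 m) + card (P4 m)"
    using fam_disjoint by (simp add: card_Un_disjoint finite_P2 finite_P4 card_image inj_on_subset[OF inj_enc2]
       inj_on_subset[OF inj_enc4])
  moreover have "card (enc2 ` P2 m \<union> enc4 ` P4 m) \<le> card (X m)"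
    by (rule card_mono[OF finite_X fam_sub])
  ultimately show ?thesis using c2 c4 r_count_X by simp
qed


lemma S2_0[simp]: "f 0 = 0 \<Longrightarrow> S2 f 0 = 0" by (simp add: S2_def)

lemma S2_mono:
  assumes "f 0 = 0" "\<And>a. 0 < a \<Longrightarrow> a < m \<Longrightarrow> f a \<le> g a"
  shows "S2 f m \<le> S2 g m"
  unfolding S2_def
proof (rule sum_mono)
  fix a assume "a \<in> {..m}"
  show "f a * f (m - a) \<le> g a * g (m - a)"
  proof (cases "a = 0 \<or> a = m")
    case True then show ?thesis using assms(1) by auto
  next
    case False
    then have "0 < a" "a < m" "0 < m - a" "m - a < m" using \<open>a \<in> {..m}\<close> by auto
    then show ?thesis using assms(2) by (simp add: mult_mono)
  qed
qed

lemma S4_mono: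
  assumes "f 0 = 0" "\<And>a. 0 < a \<Longrightarrow> a < m \<Longrightarrow> f a \<le> g a"
  shows "S4 f m \<le> S4 g m"
  unfolding S4_def
proof (rule sum_mono)
  fix s assume "s \<in> {..m}"
  show "S2 f s * S2 f (m - s) \<le> S2 g s * S2 g (m - s)"
  proof (cases "s = 0 \<or> s = m")
    case True then show ?thesis using assms(1) by auto
  next
    case False
    then have "0 < s" "s < m" "m - s < m" using \<open>s \<in> {..m}\<close> by auto
    then have "S2 f s \<le> S2 g s" "S2 f (m - s) \<le> S2 g (m - s)"
      by (auto intro!: S2_mono assms)
    then show ?thesis by (simp add: mult_mono)
  qed
qed

definition bl :: "nat list" where "bl = [0,1,1,2,6,20,70,256,969,3762,14894,59904,244088]"

lemma bl_comp:
  assumes "2 \<le> a" "a \<le> 12"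
  shows "bl ! a \<le> S2 ((!) bl) a + S4 ((!) bl) a"
proof -
  have "a = 2 \<or> a = 3 \<or> a = 4 \<or> a = 5 \<or> a = 6 \<or> a = 7 \<or> a = 8 \<or> a = 9 \<or> a = 10 \<or> a = 11 \<or> a = 12"
    using assms by presburger
  then show ?thesis
    unfolding S4_def S2_def bl_def by (elim disjE) (simp_all add: atMost_nat_numeral)
qed

lemma R1: "1 \<le> r_count 1"
proof -
  have "[[]] \<in> X 1" by (simp add: X_def dup_reachable.root)
  then have "X 1 \<noteq> {}" by blast
  then show ?thesis using finite_X r_count_X by (simp add: Suc_le_eq card_gt_0_iff)
qed

lemma bl_le_R: "a \<le> 12 \<Longrightarrow> bl ! a \<le> r_count a"
proof (induction a rule: less_induct)
  case (less a)
  consider "a = 0" | "a = 1" | "2 \<le> a" by linarith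
  then show ?case
  proof cases
    case 1 then show ?thesis by (simp add: bl_def)
  next
    case 2 then show ?thesis using R1 by (simp add: bl_def)
  next
    case 3
    have h: "\<And>b. 0 < b \<Longrightarrow> b < a \<Longrightarrow> bl ! b \<le> r_count b" using less by auto
    have z: "bl ! 0 = 0" by (simp add: bl_def)
    have "bl ! a \<le> S2 ((!) bl) a + S4 ((!) bl) a" using bl_comp 3 less.prems by auto
    also have "\<dots> \<le> S2 r_count a + S4 r_count a"
      using S2_mono[of "(!) bl" a r_count] S4_mono[of "(!) bl" a r_count] z h by (simp add: add_mono)
    also have "\<dots> \<le> r_count a" by (rule R_rec)
    finally show ?thesis .
  qed
qed

fun coef :: "nat \<Rightarrow> nat \<times> nat \<times> nat" where
  "coef 0 = (1,0,0)"
| "coef (Suc m) = (case coef m of (a,b,g) \<Rightarrow> (a+2*b+g, b+g, a+2*b+2*g))"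

lemma coef_numeral: "coef (numeral k) = (case coef (pred_numeral k) of (a,b,g) \<Rightarrow> (a+2*b+g, b+g, a+2*b+2*g))"
  by (simp add: numeral_eq_Suc)

definition vv :: "nat \<Rightarrow> nat" where
  "vv n = (case coef (n - 2) of (a,b,g) \<Rightarrow> 2*a+4*b+3*g)"

lemma vv_base: "2 \<le> n \<Longrightarrow> n \<le> 11 \<Longrightarrow> vv n \<le> bl ! (n+1)"
proof -
  assume "2 \<le> n" "n \<le> 11"
  then have "n = 2 \<or> n = 3 \<or> n = 4 \<or> n = 5 \<or> n = 6 \<or> n = 7 \<or> n = 8 \<or> n = 9 \<or> n = 10 \<or> n = 11"
    by presburger
  then show ?thesis by (elim disjE) (simp_all add: vv_def bl_def coef_numeral)
qed

lemma vv_lin: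
  assumes "8 \<le> n"
  shows "vv n \<le> 2 * (vv (n-1) + vv (n-2) + 2 * vv (n-3) + 6 * vv (n-4) + 20 * vv (n-5) + 70 * vv (n-6))"
proof -
  obtain m where "n = 8 + m" using assms le_Suc_ex by blast
  then have n: "n = Suc (Suc (Suc (Suc (Suc (Suc (Suc (Suc m)))))))" by simp
  obtain a b g where c: "coef m = (a,b,g)" by (metis prod.exhaust)
  show ?thesis unfolding n vv_def by (simp add: c)
qed

lemma vv_le_R: "2 \<le> n \<Longrightarrow> vv n \<le> r_count (n+1)"
proof (induction n rule: less_induct)
  case (less n)
  show ?case
  proof (cases "n \<le> 11")
    case True
    then show ?thesis using vv_base less.prems bl_le_R[of "n+1"] by force
  next
    case False
    then have n12: "12 \<le> n" by simp
    let ?f = "\<lambda>a. r_count a * r_count (n + 1 - a)"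
    let ?A = "{1..6::nat}"
    let ?B = "(\<lambda>a. n + 1 - a) ` ?A"
    have injB: "inj_on (\<lambda>a. n + 1 - a) ?A" using n12 by (auto simp: inj_on_def)
    have dis: "?A \<inter> ?B = {}" using n12 by auto
    have sub: "?A \<union> ?B \<subseteq> {..n+1}" using n12 by auto
    have "sum ?f ?B = (\<Sum>a\<in>?A. ?f (n + 1 - a))"
      using sum.reindex[OF injB, of ?f] by (simp add: o_def)
    also have "\<dots> = (\<Sum>a\<in>?A. r_count (n + 1 - a) * r_count a)"
      by (rule sum.cong) (use n12 in auto)
    finally have "sum ?f ?B = (\<Sum>a\<in>?A. r_count (n + 1 - a) * r_count a)" .
    then have sB: "sum ?f ?B = sum ?f ?A" by (simp add: mult.commute)
    have "2 * sum ?f ?A = sum ?f (?A \<union> ?B)"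
      using sB dis by (simp add: sum.union_disjoint)
    also have "\<dots> \<le> sum ?f {..n+1}" by (rule sum_mono2) (use sub in auto)
    also have "\<dots> = S2 r_count (n+1)" by (simp add: S2_def)
    also have "\<dots> \<le> r_count (n+1)" using R_rec[of "n+1"] by simp
    finally have main: "2 * sum ?f ?A \<le> r_count (n+1)" .
    have IH: "\<And>a::nat. 1 \<le> a \<Longrightarrow> a \<le> 6 \<Longrightarrow> vv (n - a) \<le> r_count (n + 1 - a)"
    proof -
      fix a :: nat assume "1 \<le> a" "a \<le> 6"
      then have "vv (n - a) \<le> r_count (n - a + 1)" using less.IH[of "n - a"] n12 by auto
      moreover have "n - a + 1 = n + 1 - a" using \<open>a \<le> 6\<close> n12 by auto
      ultimately show "vv (n - a) \<le> r_count (n + 1 - a)" by simp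
    qed
    have bls: "bl ! 1 = 1" "bl ! 2 = 1" "bl ! 3 = 2" "bl ! 4 = 6" "bl ! 5 = 20" "bl ! 6 = 70"
      by (simp_all add: bl_def)
    have Rb: "1 \<le> r_count 1" "1 \<le> r_count 2" "2 \<le> r_count 3" "6 \<le> r_count 4" "20 \<le> r_count 5" "70 \<le> r_count 6"
      using bl_le_R[of 1] bl_le_R[of 2] bl_le_R[of 3] bl_le_R[of 4] bl_le_R[of 5] bl_le_R[of 6] bls by auto
    have sA: "sum ?f ?A = ?f 1 + ?f 2 + ?f 3 + ?f 4 + ?f 5 + ?f 6"
      by (simp add: numeral_eq_Suc atLeastAtMostSuc_conv)
    have t: "\<And>(c::nat) (a::nat). c \<le> r_count a \<Longrightarrow> 1 \<le> a \<Longrightarrow> a \<le> 6 \<Longrightarrow> c * vv (n - a) \<le> ?f a"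
      using IH by (simp add: mult_mono)
    have "vv n \<le> 2 * (1 * vv (n-1) + 1 * vv (n-2) + 2 * vv (n-3) + 6 * vv (n-4) + 20 * vv (n-5) + 70 * vv (n-6))"
      using vv_lin[of n] n12 by simp
    also have "\<dots> \<le> 2 * sum ?f ?A"
      unfolding sA using t[OF Rb(1)] t[OF Rb(2)] t[OF Rb(3)] t[OF Rb(4)] t[OF Rb(5)] t[OF Rb(6)]
      by simp
    also have "\<dots> \<le> r_count (n+1)" by (rule main)
    finally show ?thesis .
  qed
qed


definition pal :: "nat list \<Rightarrow> nat \<Rightarrow> nat \<Rightarrow> bool" where
  "pal S i j \<longleftrightarrow> (\<forall>t. t < j - i \<longrightarrow> S ! (i + t) = S ! (j - 1 - t))"

definition PS :: "nat list \<Rightarrow> (nat \<times> nat) set" where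
  "PS S = {(i,j). i \<le> j \<and> j \<le> length S \<and> pal S i j}"

lemma is_pal_substr:
  assumes "1 \<le> a" "a \<le> Suc b" "b \<le> length S"
  shows "is_palindrome (substr S a b) \<longleftrightarrow> pal S (a - 1) b"
proof -
  define P where "P = substr S a b"
  define L where "L = b - (a - 1)"
  have len: "length P = L" using assms by (simp add: substr_def P_def L_def)
  have nth: "\<And>q. q < L \<Longrightarrow> P ! q = S ! (a - 1 + q)"
    using assms by (simp add: substr_def P_def L_def)
  have bL: "b - 1 = a - 1 + L - 1" using assms by (simp add: L_def)
  have "is_palindrome P \<longleftrightarrow> (\<forall>t. t < L \<longrightarrow> P ! t = P ! (L - 1 - t))"
    unfolding is_palindrome_def len
  proof (intro iffI allI impI ballI)
    fix t assume H: "\<forall>i\<in>{1..L}. P ! (i - 1) = P ! (L - i)" and t: "t < L"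
    have "Suc t \<in> {1..L}" using t by simp
    then have "P ! (Suc t - 1) = P ! (L - Suc t)" using H by blast
    then show "P ! t = P ! (L - 1 - t)" by simp
  next
    fix i assume H: "\<forall>t. t < L \<longrightarrow> P ! t = P ! (L - 1 - t)" and i: "i \<in> {1..L}"
    have i1: "1 \<le> i" "i \<le> L" using i by auto
    then have "i - 1 < L" by linarith
    then have "P ! (i - 1) = P ! (L - 1 - (i - 1))" using H by blast
    moreover have "L - 1 - (i - 1) = L - i" using i1 by linarith
    ultimately show "P ! (i - 1) = P ! (L - i)" by simp
  qed
  also have "\<dots> \<longleftrightarrow> (\<forall>t. t < L \<longrightarrow> S ! (a - 1 + t) = S ! (b - 1 - t))"
  proof -
    have "\<And>t. t < L \<Longrightarrow> (P ! t = P ! (L - 1 - t)) = (S ! (a - 1 + t) = S ! (b - 1 - t))"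
    proof -
      fix t assume t: "t < L"
      have "L - 1 - t < L" using t by simp
      then have "P ! (L - 1 - t) = S ! (a - 1 + (L - 1 - t))" by (rule nth)
      moreover have "a - 1 + (L - 1 - t) = b - 1 - t" using t bL by simp
      ultimately show "(P ! t = P ! (L - 1 - t)) = (S ! (a - 1 + t) = S ! (b - 1 - t))"
        using nth[OF t] by simp
    qed
    then show ?thesis by blast
  qed
  also have "\<dots> \<longleftrightarrow> pal S (a - 1) b" unfolding pal_def L_def ..
  finally show ?thesis unfolding P_def .
qed

definition mentry :: "nat \<Rightarrow> (nat \<times> nat) set \<Rightarrow> nat \<Rightarrow> nat" where
  "mentry n A i =
     (if odd i then
        (let k = (i + 1) div 2 in GREATEST r. 1 + r \<le> k \<and> k + r \<le> n \<and> (k - r - 1, k + r) \<in> A)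
      else
        (let k = i div 2 in GREATEST r. r \<le> k \<and> k + r \<le> n \<and> (k - r, k + r) \<in> A))"

lemma manacher_entry_PS: "manacher_entry S i = mentry (length S) (PS S) i"
proof -
  let ?n = "length S"
  have o: "\<And>k r. (1 + r \<le> k \<and> k + r \<le> ?n \<and> is_palindrome (substr S (k - r) (k + r)))
          = (1 + r \<le> k \<and> k + r \<le> ?n \<and> (k - r - 1, k + r) \<in> PS S)"
  proof -
    fix k r
    show "?thesis k r"
    proof (cases "1 + r \<le> k \<and> k + r \<le> ?n")
      case True
      then have "is_palindrome (substr S (k - r) (k + r)) = pal S (k - r - 1) (k + r)"
        by (intro is_pal_substr) auto
      then show ?thesis using True by (auto simp: PS_def)
    qed auto
  qed
  have e: "\<And>k r. (r \<le> k \<and> k + r \<le> ?n \<and> is_palindrome (substr S (k - r + 1) (k + r)))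
          = (r \<le> k \<and> k + r \<le> ?n \<and> (k - r, k + r) \<in> PS S)"
  proof -
    fix k r
    show "?thesis k r"
    proof (cases "r \<le> k \<and> k + r \<le> ?n")
      case True
      then have "is_palindrome (substr S (k - r + 1) (k + r)) = pal S (k - r + 1 - 1) (k + r)"
        by (intro is_pal_substr) auto
      then show ?thesis using True by (auto simp: PS_def)
    qed auto
  qed
  show ?thesis unfolding manacher_entry_def mentry_def Let_def o e ..
qed

lemma manacher_PS: "manacher S = map (mentry (length S) (PS S)) [1..<2 * length S]"
  by (simp add: manacher_def manacher_entry_PS)

definition XP :: "nat \<Rightarrow> (nat \<times> nat) set set" where
  "XP k = PS ` {S. length S = k}"

lemma finite_XP: "finite (XP k)"
proof -
  have "XP k \<subseteq> Pow ({..k} \<times> {..k})" by (auto simp: XP_def PS_def)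
  then show ?thesis by (rule finite_subset) simp
qed

lemma rho_le_XP: "rho n \<le> card (XP n)"
proof -
  have "{manacher (S :: nat list) | S. length S = n} = (\<lambda>A. map (mentry n A) [1..<2 * n]) ` XP n"
    by (auto simp: XP_def manacher_PS)
  then show ?thesis unfolding rho_def by (simp add: card_image_le finite_XP)
qed


lemma pal_triv: "j \<le> Suc i \<Longrightarrow> pal S i j"
  unfolding pal_def
proof (intro allI impI)
  fix t assume "j \<le> Suc i" "t < j - i"
  then have "t = 0" "j = Suc i" by auto
  then show "S ! (i + t) = S ! (j - 1 - t)" by simp
qed

lemma pal_snoc_le: "j \<le> length S \<Longrightarrow> pal (S @ [c]) i j \<longleftrightarrow> pal S i j"
  unfolding pal_def by (auto simp: nth_append)

lemma pal_snoc_end: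
  assumes "i < length S"
  shows "pal (S @ [c]) i (Suc (length S)) \<longleftrightarrow> S ! i = c \<and> pal S (Suc i) (length S)"
proof -
  let ?k = "length S"
  let ?S = "S @ [c]"
  have n1: "\<And>q. q < ?k \<Longrightarrow> ?S ! q = S ! q" by (simp add: nth_append)
  have n2: "?S ! ?k = c" by simp
  show ?thesis
  proof
    assume H: "pal ?S i (Suc ?k)"
    have "?S ! (i + 0) = ?S ! (Suc ?k - 1 - 0)" using H[unfolded pal_def, rule_format, of 0] assms by simp
    then have c: "S ! i = c" using assms n1 n2 by simp
    have "pal S (Suc i) ?k" unfolding pal_def
    proof (intro allI impI)
      fix t assume t: "t < ?k - Suc i"
      have "?S ! (i + Suc t) = ?S ! (Suc ?k - 1 - Suc t)" using H[unfolded pal_def, rule_format, of "Suc t"] t by simp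
      moreover have "i + Suc t < ?k" "Suc ?k - 1 - Suc t < ?k" using t by auto
      ultimately show "S ! (Suc i + t) = S ! (?k - 1 - t)" using n1 by simp
    qed
    then show "S ! i = c \<and> pal S (Suc i) ?k" using c by simp
  next
    assume H: "S ! i = c \<and> pal S (Suc i) ?k"
    show "pal ?S i (Suc ?k)" unfolding pal_def
    proof (intro allI impI)
      fix t assume t: "t < Suc ?k - i"
      consider "t = 0" | "t = ?k - i" | "0 < t" "t < ?k - i" using t by linarith
      then show "?S ! (i + t) = ?S ! (Suc ?k - 1 - t)"
      proof cases
        case 1 then show ?thesis using H assms n1 n2 by simp
      next
        case 2 then show ?thesis using H assms n1 n2 by simp
      next
        case 3
        have "t - 1 < ?k - Suc i" using 3 by auto
        then have "S ! (Suc i + (t - 1)) = S ! (?k - 1 - (t - 1))"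
          using H[THEN conjunct2, unfolded pal_def, rule_format, of "t - 1"] by simp
        moreover have "Suc i + (t - 1) = i + t" "?k - 1 - (t - 1) = Suc ?k - 1 - t" using 3 by auto
        moreover have "i + t < ?k" "Suc ?k - 1 - t < ?k" using 3 by auto
        ultimately show ?thesis using n1 by simp
      qed
    qed
  qed
qed

definition cand :: "nat list \<Rightarrow> nat set" where
  "cand S = {l. l < length S \<and> pal S (length S - l) (length S)}"

definition chr :: "nat list \<Rightarrow> nat \<Rightarrow> nat" where
  "chr S l = S ! (length S - 1 - l)"

definition Q :: "nat list \<Rightarrow> nat \<Rightarrow> nat set" where
  "Q S c = {l \<in> cand S. chr S l = c}"

lemma cand_sub: "cand S \<subseteq> {..<length S}" by (auto simp: cand_def)
lemma finite_cand: "finite (cand S)" using cand_sub finite_subset by blast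
lemma finite_Q: "finite (Q S c)" using finite_cand by (simp add: Q_def)

lemma pal_PS: "i \<le> j \<Longrightarrow> j \<le> length S \<Longrightarrow> pal S i j \<longleftrightarrow> (i, j) \<in> PS S"
  by (simp add: PS_def)

lemma cand_PS: "PS S = PS T \<Longrightarrow> length S = length T \<Longrightarrow> cand S = cand T"
  unfolding cand_def using pal_PS by (metis (no_types, lifting) diff_le_self order_refl)

lemma PS_snoc:
  "PS (S @ [c]) = PS S \<union> {(i, Suc (length S)) | i. i \<le> Suc (length S) \<and> pal (S @ [c]) i (Suc (length S))}"
  by (auto simp: PS_def pal_snoc_le le_Suc_eq)

lemma pal_snoc_Q:
  assumes "i < length S"
  shows "pal (S @ [c]) i (Suc (length S)) \<longleftrightarrow> length S - 1 - i \<in> Q S c"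
proof -
  have e: "length S - (length S - 1 - i) = Suc i" using assms by simp
  show ?thesis using assms
    by (simp add: pal_snoc_end Q_def cand_def chr_def e) (auto simp: e)
qed

lemma PS_snoc_det:
  assumes "PS S = PS T" "length S = length T" "Q S c = Q T d"
  shows "PS (S @ [c]) = PS (T @ [d])"
proof -
  have "\<And>i. i \<le> Suc (length S) \<Longrightarrow> pal (S @ [c]) i (Suc (length S)) = pal (T @ [d]) i (Suc (length T))"
  proof -
    fix i assume "i \<le> Suc (length S)"
    show "pal (S @ [c]) i (Suc (length S)) = pal (T @ [d]) i (Suc (length T))"
    proof (cases "i < length S")
      case True then show ?thesis using assms pal_snoc_Q[of i S c] pal_snoc_Q[of i T d] by simp
    next
      case False then show ?thesis using assms by (simp add: pal_triv)
    qed
  qed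
  then show ?thesis using assms by (auto simp: PS_snoc)
qed


lemma chr_eq_pal:
  assumes l12: "l1 < l2" and c1: "l1 \<in> cand S" and c2: "l2 \<in> cand S"
  shows "chr S l1 = chr S l2 \<longleftrightarrow> pal S (length S - l2 - 1) (length S - l2 + l1 + 1)"
proof -
  define k where "k = length S"
  define x where "x = k - l2"
  have l2k: "l2 < k" using c2 by (simp add: cand_def k_def)
  have x1: "1 \<le> x" using l2k by (simp add: x_def)
  have big: "\<And>t. t < l2 \<Longrightarrow> S ! (x + t) = S ! (k - 1 - t)"
    using c2 l2k unfolding cand_def pal_def k_def x_def by auto
  have small: "\<And>t. t < l1 \<Longrightarrow> S ! (k - l1 + t) = S ! (k - 1 - t)"
    using c1 unfolding cand_def pal_def k_def by auto
  have ch1: "chr S l1 = S ! (x + l1)"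
  proof -
    have "S ! (x + l1) = S ! (k - 1 - l1)" using l12 by (rule big)
    then show ?thesis by (simp add: chr_def k_def)
  qed
  have ch2: "chr S l2 = S ! (x - 1)"
  proof -
    have "k - 1 - l2 = x - 1" using l2k by (simp add: x_def)
    then show ?thesis by (simp add: chr_def k_def)
  qed
  have M: "\<And>t. t < l1 \<Longrightarrow> S ! (x + t) = S ! (x + (l1 - 1 - t))"
  proof -
    fix t assume t: "t < l1"
    have "l1 - 1 - t < l2" using t l12 by simp
    then have "S ! (x + (l1 - 1 - t)) = S ! (k - 1 - (l1 - 1 - t))" by (rule big)
    moreover have "k - 1 - (l1 - 1 - t) = k - l1 + t" using t l12 l2k by simp
    ultimately have "S ! (x + (l1 - 1 - t)) = S ! (k - l1 + t)" by simp
    also have "\<dots> = S ! (k - 1 - t)" using t by (rule small)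
    also have "\<dots> = S ! (x + t)" using t l12 by (intro big[symmetric]) simp
    finally show "S ! (x + t) = S ! (x + (l1 - 1 - t))" by simp
  qed
  have e1: "length S - l2 - 1 = x - 1" by (simp add: x_def k_def)
  have e2: "length S - l2 + l1 + 1 = x + l1 + 1" by (simp add: x_def k_def)
  have len: "x + l1 + 1 - (x - 1) = l1 + 2" using x1 by simp
  show ?thesis unfolding e1 e2 ch1 ch2 pal_def len
  proof
    assume H: "S ! (x + l1) = S ! (x - 1)"
    show "\<forall>t. t < l1 + 2 \<longrightarrow> S ! (x - 1 + t) = S ! (x + l1 + 1 - 1 - t)"
    proof (intro allI impI)
      fix t assume t: "t < l1 + 2"
      consider "t = 0" | "t = l1 + 1" | "0 < t" "t \<le> l1" using t by linarith
      then show "S ! (x - 1 + t) = S ! (x + l1 + 1 - 1 - t)"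
      proof cases
        case 1 then show ?thesis using H by simp
      next
        case 2
        have "x - 1 + t = x + l1" "x + l1 + 1 - 1 - t = x - 1" using 2 x1 by auto
        then show ?thesis using H by simp
      next
        case 3
        have "x - 1 + t = x + (t - 1)" "x + l1 + 1 - 1 - t = x + (l1 - 1 - (t - 1))" using 3 x1 by auto
        moreover have "t - 1 < l1" using 3 by auto
        then have "S ! (x + (t - 1)) = S ! (x + (l1 - 1 - (t - 1)))" by (rule M)
        ultimately show ?thesis by simp
      qed
    qed
  next
    assume H: "\<forall>t. t < l1 + 2 \<longrightarrow> S ! (x - 1 + t) = S ! (x + l1 + 1 - 1 - t)"
    have "S ! (x - 1 + 0) = S ! (x + l1 + 1 - 1 - 0)" using H[rule_format, of 0] by simp
    then show "S ! (x + l1) = S ! (x - 1)" by simp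
  qed
qed


lemma chr_rel_inv_lt:
  assumes "PS S = PS T" "length S = length T" "l1 < l2" "l1 \<in> cand S" "l2 \<in> cand S"
  shows "(chr S l1 = chr S l2) = (chr T l1 = chr T l2)"
proof -
  have cT: "l1 \<in> cand T" "l2 \<in> cand T" using assms cand_PS[OF assms(1,2)] by auto
  have l2k: "l2 < length S" using assms by (simp add: cand_def)
  let ?i = "length S - l2 - 1" and ?j = "length S - l2 + l1 + 1"
  have ij: "?i \<le> ?j" "?j \<le> length S" using l2k assms(3) by auto
  have "(chr S l1 = chr S l2) = ((?i, ?j) \<in> PS S)"
    using chr_eq_pal[OF assms(3-5)] pal_PS[OF ij] by simp
  also have "\<dots> = ((?i, ?j) \<in> PS T)" using assms by simp
  also have "\<dots> = (chr T l1 = chr T l2)"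
    using chr_eq_pal[OF assms(3) cT] pal_PS[of ?i ?j T] ij assms(2) by simp
  finally show ?thesis .
qed

lemma chr_rel_inv:
  assumes "PS S = PS T" "length S = length T" "l1 \<in> cand S" "l2 \<in> cand S"
  shows "(chr S l1 = chr S l2) = (chr T l1 = chr T l2)"
proof -
  consider "l1 = l2" | "l1 < l2" | "l2 < l1" by linarith
  then show ?thesis
  proof cases
    case 2 then show ?thesis using chr_rel_inv_lt assms by blast
  next
    case 3 then show ?thesis using chr_rel_inv_lt[OF assms(1,2) 3 assms(4,3)] by auto
  qed simp
qed

definition fresh :: "nat list \<Rightarrow> nat" where "fresh R = Suc (sum_list R)"

lemma fresh_notin: "fresh R \<notin> set R"
proof
  assume "fresh R \<in> set R"
  then have "fresh R \<le> sum_list R" by (rule member_le_sum_list) simp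
  then show False by (simp add: fresh_def)
qed

lemma chr_in_set: "l < length R \<Longrightarrow> chr R l \<in> set R"
  by (simp add: chr_def)

lemma Q_fresh: "Q R (fresh R) = {}"
proof -
  have "\<And>l. l \<in> cand R \<Longrightarrow> chr R l \<noteq> fresh R"
    using fresh_notin chr_in_set cand_sub by (metis lessThan_iff subsetD)
  then show ?thesis by (auto simp: Q_def)
qed

lemma succ_rep:
  assumes "PS S = PS R" "length S = length R"
  shows "\<exists>c' \<in> insert (fresh R) (chr R ` cand R). PS (S @ [c]) = PS (R @ [c'])"
proof (cases "Q S c = {}")
  case True
  then have "PS (S @ [c]) = PS (R @ [fresh R])"
    using PS_snoc_det[OF assms] Q_fresh by simp
  then show ?thesis by blast
next
  case False
  then obtain l0 where l0: "l0 \<in> Q S c" by blast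
  have l0c: "l0 \<in> cand S" "chr S l0 = c" using l0 by (auto simp: Q_def)
  have cS: "cand S = cand R" using cand_PS[OF assms] .
  have "Q S c = Q R (chr R l0)"
  proof -
    have "\<And>l. l \<in> cand S \<Longrightarrow> (chr S l = chr S l0) = (chr R l = chr R l0)"
    proof -
      fix l assume "l \<in> cand S"
      show "(chr S l = chr S l0) = (chr R l = chr R l0)" by (rule chr_rel_inv[OF assms \<open>l \<in> cand S\<close> l0c(1)])
    qed
    then show ?thesis unfolding Q_def using cS l0c by auto
  qed
  then have "PS (S @ [c]) = PS (R @ [chr R l0])" using PS_snoc_det[OF assms] by simp
  moreover have "chr R l0 \<in> chr R ` cand R" using l0c cS by auto
  ultimately show ?thesis by blast
qed

definition hS :: "nat list \<Rightarrow> nat" where "hS S = card (cand S)"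
definition JS :: "nat list \<Rightarrow> nat" where "JS S = card (chr S ` cand S)"

lemma card_image_kernel_le:
  assumes "finite A" "\<And>x y. x \<in> A \<Longrightarrow> y \<in> A \<Longrightarrow> g x = g y \<Longrightarrow> f x = f y"
  shows "card (f ` A) \<le> card (g ` A)"
proof -
  let ?h = "\<lambda>z. f (inv_into A g z)"
  have "f ` A \<subseteq> ?h ` (g ` A)"
  proof
    fix y assume "y \<in> f ` A"
    then obtain x where x: "x \<in> A" "y = f x" by blast
    have "inv_into A g (g x) \<in> A" "g (inv_into A g (g x)) = g x"
      using x by (auto intro: inv_into_into f_inv_into_f)
    then have "f (inv_into A g (g x)) = f x" using assms(2)[OF _ x(1)] by blast
    then have "y = ?h (g x)" using x by simp
    moreover have "g x \<in> g ` A" using x by blast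
    ultimately show "y \<in> ?h ` (g ` A)" by blast
  qed
  moreover have "finite (?h ` (g ` A))" using assms(1) by simp
  ultimately have "card (f ` A) \<le> card (?h ` (g ` A))"
    by (intro card_mono)
  also have "\<dots> \<le> card (g ` A)" by (rule card_image_le) (simp add: assms(1))
  finally show ?thesis .
qed

lemma hS_inv: assumes "PS S = PS T" "length S = length T" shows "hS S = hS T"
  using cand_PS[OF assms] by (simp add: hS_def)

lemma JS_inv:
  assumes "PS S = PS T" "length S = length T"
  shows "JS S = JS T"
proof -
  have c: "cand S = cand T" using cand_PS[OF assms] .
  have "card (chr S ` cand S) \<le> card (chr T ` cand S)"
    by (rule card_image_kernel_le[OF finite_cand]) (metis chr_rel_inv[OF assms])
  moreover have "card (chr T ` cand S) \<le> card (chr S ` cand S)"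
    by (rule card_image_kernel_le[OF finite_cand]) (metis chr_rel_inv[OF assms])
  ultimately show ?thesis unfolding JS_def c by simp
qed


lemma cand_snoc_sub: "cand (R @ [c]) \<subseteq> {0, 1} \<union> (\<lambda>l. l + 2) ` Q R c"
proof
  fix l assume l: "l \<in> cand (R @ [c])"
  let ?k = "length R"
  show "l \<in> {0, 1} \<union> (\<lambda>l. l + 2) ` Q R c"
  proof (cases "l < 2")
    case True then show ?thesis by auto
  next
    case False
    have lk: "l < Suc ?k" and p: "pal (R @ [c]) (Suc ?k - l) (Suc ?k)" using l by (auto simp: cand_def)
    have i: "Suc ?k - l < ?k" using False lk by auto
    then have "?k - 1 - (Suc ?k - l) \<in> Q R c" using pal_snoc_Q[OF i] p by simp
    moreover have "?k - 1 - (Suc ?k - l) = l - 2" using False lk by auto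
    ultimately have "l - 2 \<in> Q R c" by simp
    moreover have "l = (l - 2) + 2" using False by simp
    ultimately show ?thesis by blast
  qed
qed

lemma hS_snoc: "hS (R @ [c]) \<le> 2 + card (Q R c)"
proof -
  have "hS (R @ [c]) \<le> card ({0, 1} \<union> (\<lambda>l. l + 2) ` Q R c)"
    unfolding hS_def
    apply (rule card_mono)
     apply (simp add: finite_Q)
    apply (rule cand_snoc_sub)
    done
  also have "\<dots> \<le> card {0::nat, 1} + card ((\<lambda>l. l + 2) ` Q R c)" by (rule card_Un_le)
  also have "\<dots> \<le> 2 + card (Q R c)" using card_image_le[OF finite_Q, of "\<lambda>l. l + 2" R c] by simp
  finally show ?thesis .
qed

lemma JS_le_hS: "JS S \<le> hS S"
  unfolding JS_def hS_def by (rule card_image_le[OF finite_cand])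

lemma zero_cand: "1 \<le> length R \<Longrightarrow> 0 \<in> cand R"
  by (cases R) (auto simp: cand_def pal_triv)

lemma JS_snoc_c0:
  assumes "1 \<le> length R"
  shows "JS (R @ [chr R 0]) + 1 \<le> hS (R @ [chr R 0])"
proof -
  let ?R = "R @ [chr R 0]"
  have l: "length ?R = Suc (length R)" by simp
  have z: "0 \<in> cand ?R" unfolding cand_def l by (auto intro: pal_triv)
  have o: "1 \<in> cand ?R" unfolding cand_def l using assms by (auto intro: pal_triv)
  have e0: "chr ?R 0 = chr R 0" unfolding chr_def l by (simp add: nth_append)
  have e1: "chr ?R 1 = chr R 0" unfolding chr_def l using assms by (simp add: nth_append)
  have ni: "\<not> inj_on (chr ?R) (cand ?R)"
  proof
    assume "inj_on (chr ?R) (cand ?R)"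
    then have "(0::nat) = 1" using inj_onD[of "chr ?R" "cand ?R" 0 1] z o e0 e1 by simp
    then show False by simp
  qed
  then have "card (chr ?R ` cand ?R) \<noteq> card (cand ?R)" using inj_on_iff_eq_card[OF finite_cand] by blast
  moreover have "card (chr ?R ` cand ?R) \<le> card (cand ?R)" by (rule card_image_le[OF finite_cand])
  ultimately show ?thesis unfolding JS_def hS_def by simp
qed

lemma fiber_sum: "(\<Sum>c\<in>chr R ` cand R. card (Q R c)) = hS R"
proof -
  have "cand R = (\<Union>c\<in>chr R ` cand R. Q R c)" by (auto simp: Q_def)
  then have "hS R = card (\<Union>c\<in>chr R ` cand R. Q R c)" by (simp add: hS_def)
  also have "\<dots> = (\<Sum>c\<in>chr R ` cand R. card (Q R c))"
    by (rule card_UN_disjoint) (auto simp: finite_cand finite_Q Q_def)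
  finally show ?thesis by simp
qed

definition ca :: "nat \<Rightarrow> nat" where "ca m = fst (coef m)"
definition cb :: "nat \<Rightarrow> nat" where "cb m = fst (snd (coef m))"
definition cg :: "nat \<Rightarrow> nat" where "cg m = snd (snd (coef m))"

lemma coef_split: "coef m = (ca m, cb m, cg m)" by (simp add: ca_def cb_def cg_def)

lemma c_Suc: "ca (Suc m) = ca m + 2 * cb m + cg m" "cb (Suc m) = cb m + cg m"
  "cg (Suc m) = ca m + 2 * cb m + 2 * cg m"
  by (simp_all add: ca_def cb_def cg_def split: prod.splits)

lemma c_0: "ca 0 = 1" "cb 0 = 0" "cg 0 = 0" by (simp_all add: ca_def cb_def cg_def)

definition W :: "nat \<Rightarrow> nat list \<Rightarrow> nat" where
  "W m S = ca m + cb m * hS S + cg m * JS S"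

lemma W_inv: assumes "PS S = PS T" "length S = length T" shows "W m S = W m T"
  using hS_inv[OF assms] JS_inv[OF assms] by (simp add: W_def)

lemma trans_R:
  assumes k1: "1 \<le> length R"
  shows "(\<Sum>c\<in>insert (fresh R) (chr R ` cand R). W m (R @ [c])) \<le> W (Suc m) R"
proof -
  define C where "C = chr R ` cand R"
  define a where "a = ca m"
  define b where "b = cb m"
  define g where "g = cg m"
  define h where "h = hS R"
  define J where "J = card C"
  have finC: "finite C" using finite_cand by (simp add: C_def)
  have frC: "fresh R \<notin> C"
    using fresh_notin chr_in_set cand_sub unfolding C_def by (metis imageE lessThan_iff subsetD)
  have c0: "chr R 0 \<in> C" using zero_cand[OF k1] by (simp add: C_def)
  have JJ: "JS R = J" by (simp add: JS_def J_def C_def)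
  define SH where "SH = (\<Sum>c\<in>C. hS (R @ [c]))"
  define SJ where "SJ = (\<Sum>c\<in>C. JS (R @ [c]))"
  have Wsum: "(\<Sum>c\<in>C. W m (R @ [c])) = J * a + b * SH + g * SJ"
    by (simp add: W_def sum.distrib sum_distrib_left SH_def SJ_def J_def a_def b_def g_def)
  have SH_le: "SH \<le> 2 * J + h"
  proof -
    have "SH \<le> (\<Sum>c\<in>C. 2 + card (Q R c))" unfolding SH_def by (rule sum_mono) (rule hS_snoc)
    also have "\<dots> = (\<Sum>c\<in>C. 2) + (\<Sum>c\<in>C. card (Q R c))" by (rule sum.distrib)
    also have "\<dots> = 2 * J + h" using fiber_sum[of R] by (simp add: J_def C_def h_def)
    finally show ?thesis .
  qed
  have SJ_le: "SJ + 1 \<le> SH"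
  proof -
    have "SJ = JS (R @ [chr R 0]) + (\<Sum>c\<in>C - {chr R 0}. JS (R @ [c]))"
      unfolding SJ_def using sum.remove[OF finC c0] by simp
    moreover have "SH = hS (R @ [chr R 0]) + (\<Sum>c\<in>C - {chr R 0}. hS (R @ [c]))"
      unfolding SH_def using sum.remove[OF finC c0] by simp
    moreover have "(\<Sum>c\<in>C - {chr R 0}. JS (R @ [c])) \<le> (\<Sum>c\<in>C - {chr R 0}. hS (R @ [c]))"
      by (rule sum_mono) (rule JS_le_hS)
    ultimately show ?thesis using JS_snoc_c0[OF k1] by linarith
  qed
  have hf: "hS (R @ [fresh R]) \<le> 2" using hS_snoc[of R "fresh R"] by (simp add: Q_fresh)
  have jf: "JS (R @ [fresh R]) \<le> 2" using hf JS_le_hS order_trans by blast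
  have Wf: "W m (R @ [fresh R]) \<le> a + 2 * b + 2 * g"
  proof -
    have "cb m * hS (R @ [fresh R]) \<le> cb m * 2" using hf by (rule mult_le_mono2)
    moreover have "cg m * JS (R @ [fresh R]) \<le> cg m * 2" using jf by (rule mult_le_mono2)
    ultimately show ?thesis unfolding W_def a_def b_def g_def by linarith
  qed
  have t1: "b * SH \<le> b * (2 * J + h)" using SH_le by (rule mult_le_mono2)
  have t2: "g * (SJ + 1) \<le> g * (2 * J + h)" using SJ_le SH_le by (intro mult_le_mono2) linarith
  have "(\<Sum>c\<in>insert (fresh R) C. W m (R @ [c])) = W m (R @ [fresh R]) + (\<Sum>c\<in>C. W m (R @ [c]))"
    using finC frC by simp
  also have "\<dots> \<le> (a + 2 * b + g) + (b + g) * h + (a + 2 * b + 2 * g) * J"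
  proof -
    have t1': "b * SH \<le> 2 * (b * J) + b * h" using t1 by (simp add: algebra_simps)
    have t2': "g * SJ + g \<le> 2 * (g * J) + g * h" using t2 by (simp add: algebra_simps)
    have r: "(a + 2 * b + g) + (b + g) * h + (a + 2 * b + 2 * g) * J
           = a + 2 * b + g + b * h + g * h + a * J + 2 * (b * J) + 2 * (g * J)"
      by (simp add: algebra_simps)
    have jc: "J * a = a * J" by simp
    show ?thesis unfolding Wsum r jc using Wf t1' t2' by linarith
  qed
  also have "\<dots> = W (Suc m) R"
    by (simp add: W_def c_Suc a_def b_def g_def h_def JJ)
  finally show ?thesis unfolding C_def .
qed


definition rep :: "nat \<Rightarrow> (nat \<times> nat) set \<Rightarrow> nat list" where
  "rep k A = (SOME S. length S = k \<and> PS S = A)"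

lemma rep_props: "A \<in> XP k \<Longrightarrow> length (rep k A) = k \<and> PS (rep k A) = A"
  unfolding rep_def XP_def by (rule someI_ex) auto

lemma W_rep: "length S = k \<Longrightarrow> W m (rep k (PS S)) = W m S"
proof -
  assume "length S = k"
  then have "PS S \<in> XP k" by (auto simp: XP_def)
  then have "length (rep k (PS S)) = length S" "PS (rep k (PS S)) = PS S"
    using rep_props \<open>length S = k\<close> by auto
  then show ?thesis by (metis W_inv)
qed

definition Phi :: "nat \<Rightarrow> nat \<Rightarrow> nat" where
  "Phi k m = (\<Sum>A\<in>XP k. W m (rep k A))"

lemma sum_UN_le_nat:
  fixes f :: "'a \<Rightarrow> nat"
  assumes "finite I" "\<And>i. i \<in> I \<Longrightarrow> finite (B i)"
  shows "sum f (\<Union>i\<in>I. B i) \<le> (\<Sum>i\<in>I. sum f (B i))"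
  using assms
proof (induction I rule: finite_induct)
  case empty then show ?case by simp
next
  case (insert x F)
  have fU: "finite (\<Union>i\<in>F. B i)" using insert by auto
  have fx: "finite (B x)" using insert by auto
  have "sum f (\<Union>i\<in>insert x F. B i) = sum f (B x \<union> (\<Union>i\<in>F. B i))" by simp
  also have "\<dots> \<le> sum f (B x) + sum f (\<Union>i\<in>F. B i)"
    using sum.union_inter[OF fx fU, of f] by linarith
  also have "\<dots> \<le> sum f (B x) + (\<Sum>i\<in>F. sum f (B i))" using insert by simp
  also have "\<dots> = (\<Sum>i\<in>insert x F. sum f (B i))" using insert by simp
  finally show ?case .
qed

lemma Phi_step:
  assumes k1: "1 \<le> k"
  shows "Phi (Suc k) m \<le> Phi k (Suc m)"
proof -
  define F where "F = (\<lambda>A. (\<lambda>c. PS (rep k A @ [c])) ` insert (fresh (rep k A)) (chr (rep k A) ` cand (rep k A)))"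
  have finF: "\<And>A. finite (F A)" unfolding F_def using finite_cand by simp
  have sub: "XP (Suc k) \<subseteq> (\<Union>A\<in>XP k. F A)"
  proof
    fix B assume "B \<in> XP (Suc k)"
    then obtain S' where S': "length S' = Suc k" "B = PS S'" by (auto simp: XP_def)
    then obtain S c where Sc: "S' = S @ [c]" by (metis length_Suc_conv rev_exhaust list.distinct(1))
    have lS: "length S = k" using S' Sc by simp
    define A where "A = PS S"
    have A: "A \<in> XP k" using lS by (auto simp: XP_def A_def)
    have R: "length (rep k A) = k" "PS (rep k A) = PS S" using rep_props[OF A] by (auto simp: A_def)
    obtain c' where c': "c' \<in> insert (fresh (rep k A)) (chr (rep k A) ` cand (rep k A))"
      "PS (S @ [c]) = PS (rep k A @ [c'])"
      using succ_rep[of S "rep k A" c] R lS by auto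
    have "B \<in> F A" unfolding F_def using c' S' Sc by auto
    then show "B \<in> (\<Union>A\<in>XP k. F A)" using A by blast
  qed
  have "Phi (Suc k) m \<le> (\<Sum>B\<in>(\<Union>A\<in>XP k. F A). W m (rep (Suc k) B))"
    unfolding Phi_def by (rule sum_mono2) (use sub finF finite_XP in auto)
  also have "\<dots> \<le> (\<Sum>A\<in>XP k. \<Sum>B\<in>F A. W m (rep (Suc k) B))"
    by (rule sum_UN_le_nat) (use finite_XP finF in auto)
  also have "\<dots> \<le> (\<Sum>A\<in>XP k. W (Suc m) (rep k A))"
  proof (rule sum_mono)
    fix A assume A: "A \<in> XP k"
    let ?R = "rep k A"
    have lR: "length ?R = k" using rep_props[OF A] by simp
    have "(\<Sum>B\<in>F A. W m (rep (Suc k) B))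
        \<le> (\<Sum>c\<in>insert (fresh ?R) (chr ?R ` cand ?R). W m (rep (Suc k) (PS (?R @ [c]))))"
      unfolding F_def using sum_image_le[of "insert (fresh ?R) (chr ?R ` cand ?R)" "\<lambda>B. W m (rep (Suc k) B)"
          "\<lambda>c. PS (?R @ [c])"] finite_cand by (simp add: o_def)
    also have "\<dots> = (\<Sum>c\<in>insert (fresh ?R) (chr ?R ` cand ?R). W m (?R @ [c]))"
      by (rule sum.cong) (auto simp: W_rep lR)
    also have "\<dots> \<le> W (Suc m) ?R" by (rule trans_R) (use lR k1 in simp)
    finally show "(\<Sum>B\<in>F A. W m (rep (Suc k) B)) \<le> W (Suc m) ?R" .
  qed
  also have "\<dots> = Phi k (Suc m)" by (simp add: Phi_def)
  finally show ?thesis .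
qed

lemma Phi_iter: "1 \<le> k \<Longrightarrow> Phi (k + d) m \<le> Phi k (m + d)"
proof (induction d arbitrary: m)
  case 0 then show ?case by simp
next
  case (Suc d)
  have "Phi (k + Suc d) m = Phi (Suc (k + d)) m" by simp
  also have "\<dots> \<le> Phi (k + d) (Suc m)" by (rule Phi_step) (use Suc in simp)
  also have "\<dots> \<le> Phi k (Suc m + d)" using Suc by blast
  also have "\<dots> = Phi k (m + Suc d)" by simp
  finally show ?case .
qed

lemma card_XP_Phi: "card (XP n) = Phi n 0"
  by (simp add: Phi_def W_def c_0)

lemma PS_eqI:
  assumes "length S = length T" "\<And>i j. i \<le> j \<Longrightarrow> j \<le> length S \<Longrightarrow> pal S i j = pal T i j"
  shows "PS S = PS T"
  using assms by (auto simp: PS_def)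

lemma pal02: "pal S 0 2 \<longleftrightarrow> S ! 0 = S ! 1"
  unfolding pal_def by (auto simp: less_2_cases_iff)

lemma PS2:
  assumes "length S = 2"
  shows "PS S = PS [0, if S ! 0 = S ! 1 then 0 else 1]"
proof (rule PS_eqI)
  show "length S = length [0::nat, if S ! 0 = S ! 1 then 0 else 1]" using assms by simp
next
  fix i j assume ij: "i \<le> j" "j \<le> length S"
  show "pal S i j = pal [0, if S ! 0 = S ! 1 then 0 else 1] i j"
  proof (cases "j \<le> Suc i")
    case True then show ?thesis by (simp add: pal_triv)
  next
    case False
    then have "i = 0" "j = 2" using ij assms by auto
    then show ?thesis by (simp add: pal02)
  qed
qed

lemma hS_le_len: "hS S \<le> length S"
proof -
  have "hS S \<le> card {..<length S}" unfolding hS_def by (rule card_mono) (simp_all add: cand_sub)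
  then show ?thesis by simp
qed

lemma Phi2: "Phi 2 m \<le> vv (m + 2)"
proof -
  let ?a = "PS [0::nat, 0]" and ?b = "PS [0::nat, 1]"
  have sub: "XP 2 \<subseteq> {?a, ?b}"
  proof
    fix A assume "A \<in> XP 2"
    then obtain S where S: "length S = 2" "A = PS S" by (auto simp: XP_def)
    then show "A \<in> {?a, ?b}" using PS2[OF S(1)] by (cases "S ! 0 = S ! 1") auto
  qed
  have "Phi 2 m \<le> (\<Sum>A\<in>{?a, ?b}. W m (rep 2 A))"
    unfolding Phi_def by (rule sum_mono2) (use sub in auto)
  also have "\<dots> \<le> W m (rep 2 ?a) + W m (rep 2 ?b)" by (cases "?a = ?b") simp_all
  also have "\<dots> = W m [0, 0] + W m [0, 1]" by (simp add: W_rep)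
  also have "\<dots> \<le> vv (m + 2)"
  proof -
    have h1: "hS [0::nat, 0] \<le> 2" "hS [0::nat, 1] \<le> 2" using hS_le_len[of "[0::nat,0]"] hS_le_len[of "[0::nat,1]"] by simp_all
    have j2: "JS [0::nat, 1] \<le> 2" using h1(2) JS_le_hS[of "[0::nat,1]"] by simp
    have z: "\<And>l. l < 2 \<Longrightarrow> [0::nat, 0] ! (1 - l) = 0"
    proof -
      fix l :: nat assume "l < 2"
      then have "l = 0 \<or> l = 1" by auto
      then show "[0::nat, 0] ! (1 - l) = 0" by auto
    qed
    have "chr [0::nat, 0] ` cand [0, 0] \<subseteq> {0}"
    proof
      fix y assume "y \<in> chr [0::nat, 0] ` cand [0, 0]"
      then obtain l where l: "l \<in> cand [0::nat, 0]" "y = chr [0, 0] l" by blast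
      have "l < 2" using l(1) cand_sub[of "[0::nat,0]"] by auto
      then show "y \<in> {0}" using l(2) z by (simp add: chr_def)
    qed
    then have j1: "JS [0::nat, 0] \<le> 1" unfolding JS_def using card_mono[of "{0::nat}"] by fastforce
    have "cb m * hS [0::nat, 0] \<le> cb m * 2" "cb m * hS [0::nat, 1] \<le> cb m * 2"
      using h1 by (simp_all add: mult_le_mono2)
    moreover have "cg m * JS [0::nat, 0] \<le> cg m * 1" "cg m * JS [0::nat, 1] \<le> cg m * 2"
      using j1 j2 by (simp_all add: mult_le_mono2 del: mult_1_right)
    moreover have "vv (m + 2) = 2 * ca m + 4 * cb m + 3 * cg m" by (simp add: vv_def coef_split)
    ultimately show ?thesis unfolding W_def by linarith
  qed
  finally show ?thesis .
qed

lemma XP1: "card (XP 1) \<le> 1"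
proof -
  have "XP 1 \<subseteq> {PS [0]}"
  proof
    fix A assume "A \<in> XP 1"
    then obtain S where S: "length S = 1" "A = PS S" by (auto simp: XP_def)
    have "PS S = PS [0]" by (rule PS_eqI) (use S in \<open>auto simp: pal_triv\<close>)
    then show "A \<in> {PS [0]}" using S by simp
  qed
  then show ?thesis using card_mono[of "{PS [0]}" "XP 1"] by simp
qed

theorem theorem3p1:
  fixes n :: nat
  assumes "n \<ge> 1"
  shows "rho n \<le> r_count (n + 1)"
proof (cases "n = 1")
  case True
  have "rho 1 \<le> 1" using rho_le_XP[of 1] XP1 by simp
  moreover have "1 \<le> r_count 2" using bl_le_R[of 2] by (simp add: bl_def)
  moreover have "r_count (n + 1) = r_count 2" using True by (simp add: numeral_2_eq_2)
  moreover have "rho n = rho 1" using True by simp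
  ultimately show ?thesis by linarith
next
  case False
  then have n2: "2 \<le> n" using assms by simp
  have "rho n \<le> card (XP n)" by (rule rho_le_XP)
  also have "\<dots> = Phi (2 + (n - 2)) 0"
  proof -
    have "2 + (n - 2) = n" using n2 by simp
    then show ?thesis by (simp only: card_XP_Phi)
  qed
  also have "\<dots> \<le> Phi 2 (0 + (n - 2))" by (rule Phi_iter) simp
  also have "\<dots> \<le> vv (n - 2 + 2)" using Phi2 by simp
  also have "\<dots> = vv n"
  proof -
    have "n - 2 + 2 = n" using n2 by simp
    then show ?thesis by (simp only:)
  qed
  also have "\<dots> \<le> r_count (n + 1)" by (rule vv_le_R[OF n2])
  finally show ?thesis .
qed


end
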